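(* Let $\{\varphi_i\}_{i=1}^N$ and $\{\psi_i\}_{i=1}^N$ be frames for $\mathbb{R}^d$ with analysis operators $\Phi,\Psi\in\mathbb{R}^{N\times d}$, and let $\Psi^\dagger$ be the Moore–Penrose pseudoinverse of $\Psi$. If $\Psi^\dagger\Phi$ has no negative eigenvalues and $\{(\varphi_i,\psi_i)\}_{i=1}^N$ is a cyclically monotone set, then every measure $\mu_t$, $t\in[0,1]$, on the Wasserstein geodesic between $\mu_\Phi=\frac1N\sum_i\delta_{\varphi_i}$ and $\mu_\Psi=\frac1N\sum_i\delta_{\psi_i}$ has support which spans $\mathbb{R}^d$.
   Context: A finite frame is a finite spanning set of $\mathbb{R}^d$; its analysis operator is the matrix whose rows are the frame vectors. A set $S\subset\mathbb{R}^d\times\mathbb{R}^d$ is cyclically monotone if for every finite subset $\{(x_1,y_1),\dots,(x_n,y_n)\}\subset S$ and every permutation $\sigma$ of $\{1,\dots,n\}$, $\sum_i\langle x_i,y_i\rangle\ge\sum_i\langle x_i,y_{\sigma(i)}\rangle$. Geodesic: for probability measures $\mu_0,\mu_1$ with finite second moments, let $\gamma_0$ be an optimal coupling for the 2-Wasserstein distance (minimizing $\iint\|x-y\|^2d\gamma$ over couplings of $\mu_0,\mu_1$); the geodesic measure $\mu_t$ is defined by $\int G\,d\mu_t=\iint G((1-t)x+ty)\,d\gamma_0(x,y)$ for all bounded continuous $G$. *)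

theory Defs
  imports "HOL-Analysis.Analysis" "HOL-Probability.Probability_Mass_Function"
begin

definition analysis_op :: "('n::finite \<Rightarrow> real^'d) \<Rightarrow> real^'d^'n" where
  "analysis_op f = (\<chi> i. f i)"

definition is_frame :: "('n::finite \<Rightarrow> real^'d) \<Rightarrow> bool" where
  "is_frame f \<longleftrightarrow> span (range f) = UNIV"

definition mp_pinv :: "real^'d^'n \<Rightarrow> real^'n^'d" where
  "mp_pinv A = (THE X. A ** X ** A = A \<and> X ** A ** X = X \<and>
       transpose (A ** X) = A ** X \<and> transpose (X ** A) = X ** A)"

definition is_eigenvalue :: "real^'d^'d \<Rightarrow> real \<Rightarrow> bool" where
  "is_eigenvalue M l \<longleftrightarrow> (\<exists>v. v \<noteq> 0 \<and> M *v v = l *\<^sub>R v)"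

definition cyclically_monotone :: "('a::real_inner \<times> 'a) set \<Rightarrow> bool" where
  "cyclically_monotone S \<longleftrightarrow>
     (\<forall>(n::nat) (x::nat \<Rightarrow> 'a) y \<sigma>. (\<forall>i<n. (x i, y i) \<in> S) \<longrightarrow> \<sigma> permutes {..<n} \<longrightarrow>
        (\<Sum>i<n. x i \<bullet> y (\<sigma> i)) \<le> (\<Sum>i<n. x i \<bullet> y i))"

definition empirical :: "('n::finite \<Rightarrow> 'a) \<Rightarrow> 'a pmf" where
  "empirical f = map_pmf f (pmf_of_set (UNIV :: 'n set))"

definition pair_coupling :: "('n::finite \<Rightarrow> 'a) \<Rightarrow> ('n \<Rightarrow> 'a) \<Rightarrow> ('a \<times> 'a) pmf" where
  "pair_coupling f g = map_pmf (\<lambda>i. (f i, g i)) (pmf_of_set (UNIV :: 'n set))"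

definition is_coupling :: "'a pmf \<Rightarrow> 'a pmf \<Rightarrow> ('a \<times> 'a) pmf \<Rightarrow> bool" where
  "is_coupling \<mu> \<nu> \<gamma> \<longleftrightarrow> map_pmf fst \<gamma> = \<mu> \<and> map_pmf snd \<gamma> = \<nu>"

definition transport_cost :: "('a::real_normed_vector \<times> 'a) pmf \<Rightarrow> real" where
  "transport_cost \<gamma> = measure_pmf.expectation \<gamma> (\<lambda>(x, y). (norm (x - y))\<^sup>2)"

definition optimal_coupling :: "'a::real_normed_vector pmf \<Rightarrow> 'a pmf \<Rightarrow> ('a \<times> 'a) pmf \<Rightarrow> bool" where
  "optimal_coupling \<mu> \<nu> \<gamma> \<longleftrightarrow> is_coupling \<mu> \<nu> \<gamma> \<and>
     (\<forall>\<gamma>'. is_coupling \<mu> \<nu> \<gamma>' \<longrightarrow> transport_cost \<gamma> \<le> transport_cost \<gamma>')"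

definition geodesic_measure :: "('a::real_vector \<times> 'a) pmf \<Rightarrow> real \<Rightarrow> 'a pmf" where
  "geodesic_measure \<gamma> t = map_pmf (\<lambda>(x, y). (1 - t) *\<^sub>R x + t *\<^sub>R y) \<gamma>"

end

theory Submission
  imports Defs "HOL-Combinatorics.Permutations"
begin


lemma aop_apply: "(analysis_op f *v v) $ i = f i \<bullet> v"
  by (simp add: analysis_op_def matrix_vector_mult_def inner_vec_def mult.commute)

lemma frame_inj:
  assumes "is_frame f" "analysis_op f *v v = 0"
  shows "v = 0"
proof -
  have "\<forall>i. f i \<bullet> v = 0" using assms(2) aop_apply by (metis zero_index)
  hence "\<forall>y\<in>span (range f). y \<bullet> v = 0"
    by (metis (no_types, lifting) orthogonal_def orthogonal_to_span rangeE orthogonal_commute)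
  hence "v \<bullet> v = 0" using assms(1) unfolding is_frame_def by auto
  thus ?thesis by simp
qed

lemma inj_frame:
  fixes f :: "'n::finite \<Rightarrow> real^'d"
  assumes "\<And>v. analysis_op f *v v = 0 \<Longrightarrow> v = 0"
  shows "span (range f) = UNIV"
proof (rule ccontr)
  assume "span (range f) \<noteq> UNIV"
  hence "dim (range f) < DIM(real^'d)"
    by (metis dim_eq_full dim_subset_UNIV order_less_le)
  then obtain x :: "real^'d" where x: "x \<noteq> 0" "\<And>y. y \<in> span (range f) \<Longrightarrow> orthogonal x y"
    using orthogonal_to_subspace_exists by blast
  have "analysis_op f *v x = 0"
    by (simp add: vec_eq_iff aop_apply) (metis x(2) span_base rangeI orthogonal_def inner_commute)
  thus False using assms x(1) by blast
qed

lemma pinv_left: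
  fixes A :: "real^'d^'n"
  assumes inj: "\<And>v. A *v v = 0 \<Longrightarrow> v = 0"
  shows "mp_pinv A ** A = mat 1"
proof -
  define P where "P X \<longleftrightarrow> A ** X ** A = A \<and> X ** A ** X = X \<and>
       transpose (A ** X) = A ** X \<and> transpose (X ** A) = X ** A" for X
  have left: "X ** A = mat 1" if "A ** X ** A = A" for X
  proof -
    have "(X ** A) *v v = v" for v
    proof -
      have "A *v ((X ** A) *v v - v) = 0"
        using that by (simp add: matrix_vector_mul_assoc matrix_vector_mult_diff_distrib matrix_mul_assoc)
      thus ?thesis using inj by (metis eq_iff_diff_eq_0)
    qed
    thus ?thesis by (simp add: matrix_eq)
  qed
  have injT: "transpose A ** A *v v = 0 \<Longrightarrow> v = 0" for v
  proof -
    assume "transpose A ** A *v v = 0"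
    hence "v \<bullet> (transpose A ** A *v v) = 0" by simp
    hence "v \<bullet> ((A *v v) v* A) = 0"
      by (simp add: matrix_vector_mul_assoc[symmetric])
    hence "(A *v v) \<bullet> (A *v v) = 0"
      by (metis dot_lmul_matrix inner_commute)
    thus "v = 0" using inj by simp
  qed
  obtain C where C: "C ** (transpose A ** A) = mat 1"
    using matrix_left_invertible_ker[of "transpose A ** A"] injT by blast
  hence C2: "(transpose A ** A) ** C = mat 1" using matrix_left_right_inverse by blast
  have symM: "transpose (transpose A ** A) = transpose A ** A"
    by (simp add: matrix_transpose_mul)
  have "transpose C ** (transpose A ** A) = mat 1"
    using C2 by (metis matrix_transpose_mul symM transpose_mat)
  hence CT: "transpose C = C"
    by (metis C2 matrix_mul_assoc matrix_mul_lid matrix_mul_rid)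
  define X0 where "X0 = C ** transpose A"
  have X0A: "X0 ** A = mat 1" using C by (simp add: X0_def matrix_mul_assoc)
  have "P X0"
    unfolding P_def
    by (simp add: X0A matrix_mul_assoc[symmetric] ) 
      (simp add: X0_def matrix_transpose_mul CT matrix_mul_assoc)
  moreover have "X = X0" if "P X" for X
  proof -
    have XA: "X ** A = mat 1" using that left P_def by blast
    have s1: "transpose (A ** X) = A ** X" using that P_def by blast
    have s2: "transpose (A ** X0) = A ** X0" using \<open>P X0\<close> P_def by blast
    have a2: "A ** X0 ** A = A" using \<open>P X0\<close> P_def by blast
    have AT: "transpose A = transpose A ** (A ** X0)"
      by (metis a2 matrix_transpose_mul s2)
    have "X = X ** (A ** X)" by (metis XA matrix_mul_assoc matrix_mul_lid)
    also have "\<dots> = X ** (transpose X ** transpose A)" by (metis s1 matrix_transpose_mul)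
    also have "\<dots> = X ** (transpose X ** (transpose A ** (A ** X0)))" using AT by simp
    also have "\<dots> = X ** transpose (A ** X) ** A ** X0" by (simp add: matrix_transpose_mul matrix_mul_assoc)
    also have "\<dots> = X0" by (simp add: s1 matrix_mul_assoc) (metis XA matrix_mul_assoc matrix_mul_lid)
    finally show ?thesis .
  qed
  ultimately have "mp_pinv A = X0"
    unfolding mp_pinv_def P_def[symmetric] by (rule the_equality)
  thus ?thesis using X0A by simp
qed



fun W :: "('n \<Rightarrow> 'a::real_inner) \<Rightarrow> ('n \<Rightarrow> 'a) \<Rightarrow> 'n \<Rightarrow> 'n list \<Rightarrow> real" where
  "W \<phi> \<psi> a [] = 0"
| "W \<phi> \<psi> a (b # xs) = \<psi> a \<bullet> (\<phi> b - \<phi> a) + W \<phi> \<psi> b xs"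

lemma W_snoc: "W \<phi> \<psi> a (xs @ [k]) = W \<phi> \<psi> a xs + \<psi> (last (a # xs)) \<bullet> (\<phi> k - \<phi> (last (a # xs)))"
  by (induction xs arbitrary: a) auto

lemma W_sum: "W \<phi> \<psi> a xs = (\<Sum>i<length xs. \<psi> ((a # xs) ! i) \<bullet> (\<phi> ((a # xs) ! Suc i) - \<phi> ((a # xs) ! i)))"
proof (induction xs arbitrary: a)
  case Nil then show ?case by simp
next
  case (Cons b xs)
  show ?case
    by (simp only: W.simps Cons sum.lessThan_Suc_shift length_Cons) simp
qed

lemma cyc_W:
  assumes cm: "cyclically_monotone (range (\<lambda>i. (\<phi> i, \<psi> i)))"
  shows "W \<phi> \<psi> a xs + \<psi> (last (a # xs)) \<bullet> (\<phi> a - \<phi> (last (a # xs))) \<le> 0"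
proof -
  define c where "c = a # xs"
  define n where "n = length xs"
  define m where "m = Suc n"
  define \<sigma> where "\<sigma> i = (if i = 0 then n else if i < m then i - 1 else i)" for i
  have lastc: "last (a # xs) = c ! n" unfolding c_def n_def by (simp add: last_conv_nth)
  have inj: "inj_on \<sigma> {..<m}" unfolding inj_on_def \<sigma>_def m_def by auto
  have img: "\<sigma> ` {..<m} \<subseteq> {..<m}" unfolding \<sigma>_def m_def by auto
  have "\<sigma> ` {..<m} = {..<m}" using endo_inj_surj[OF _ img inj] by simp
  hence "bij_betw \<sigma> {..<m} {..<m}" using inj by (simp add: bij_betw_def)
  hence perm: "\<sigma> permutes {..<m}" by (rule bij_imp_permutes) (simp add: \<sigma>_def m_def)
  have "(\<Sum>i<m. \<phi> (c ! i) \<bullet> \<psi> (c ! (\<sigma> i))) \<le> (\<Sum>i<m. \<phi> (c ! i) \<bullet> \<psi> (c ! i))"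
    using cm perm unfolding cyclically_monotone_def
    by (elim allE[of _ m] allE[of _ "\<lambda>i. \<phi> (c ! i)"] allE[of _ "\<lambda>i. \<psi> (c ! i)"] allE[of _ \<sigma>]) auto
  moreover have "(\<Sum>i<m. \<phi> (c ! i) \<bullet> \<psi> (c ! (\<sigma> i))) = \<phi> (c ! 0) \<bullet> \<psi> (c ! n) + (\<Sum>i<n. \<phi> (c ! Suc i) \<bullet> \<psi> (c ! i))"
    unfolding m_def by (simp only: sum.lessThan_Suc_shift) (simp add: \<sigma>_def m_def)
  moreover have "(\<Sum>i<m. \<phi> (c ! i) \<bullet> \<psi> (c ! i)) = (\<Sum>i<n. \<phi> (c ! i) \<bullet> \<psi> (c ! i)) + \<phi> (c ! n) \<bullet> \<psi> (c ! n)"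
    unfolding m_def by simp
  moreover have "W \<phi> \<psi> a xs = (\<Sum>i<n. \<phi> (c ! Suc i) \<bullet> \<psi> (c ! i)) - (\<Sum>i<n. \<phi> (c ! i) \<bullet> \<psi> (c ! i))"
    unfolding W_sum c_def n_def by (simp add: inner_diff_right inner_commute sum_subtractf)
  ultimately show ?thesis unfolding lastc
    by (simp add: c_def inner_diff_right inner_commute)
qed



lemma potentials:
  fixes \<phi> \<psi> :: "'n \<Rightarrow> 'a::real_inner"
  assumes cm: "cyclically_monotone (range (\<lambda>i. (\<phi> i, \<psi> i)))"
  obtains h where "\<And>j k. h j + \<psi> j \<bullet> (\<phi> k - \<phi> j) \<le> h k"
proof -
  fix i0 :: 'n
  define S where "S j = {xs. last (i0 # xs) = j}" for j
  define h where "h j = (SUP xs\<in>S j. W \<phi> \<psi> i0 xs)" for j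
  have ne: "S j \<noteq> {}" for j unfolding S_def by (metis (mono_tags) empty_iff last.simps list.distinct(1) mem_Collect_eq last_ConsR last_ConsL)
  have bdd: "bdd_above ((W \<phi> \<psi> i0) ` S j)" for j
  proof (rule bdd_aboveI2)
    fix xs assume "xs \<in> S j"
    hence "last (i0 # xs) = j" by (simp add: S_def)
    thus "W \<phi> \<psi> i0 xs \<le> \<psi> j \<bullet> (\<phi> j - \<phi> i0)"
      using cyc_W[OF cm, of i0 xs] by (simp add: inner_diff_right)
  qed
  have "h j + \<psi> j \<bullet> (\<phi> k - \<phi> j) \<le> h k" for j k
  proof -
    have "h j \<le> h k - \<psi> j \<bullet> (\<phi> k - \<phi> j)"
      unfolding h_def[of j]
    proof (rule cSUP_least[OF ne])
      fix xs assume xs: "xs \<in> S j"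
      hence "xs @ [k] \<in> S k" by (simp add: S_def)
      hence "W \<phi> \<psi> i0 (xs @ [k]) \<le> h k" unfolding h_def by (rule cSUP_upper[OF _ bdd])
      moreover have "last (i0 # xs) = j" using xs by (simp add: S_def)
      ultimately show "W \<phi> \<psi> i0 xs \<le> h k - \<psi> j \<bullet> (\<phi> k - \<phi> j)" by (simp add: W_snoc)
    qed
    thus ?thesis by simp
  qed
  thus ?thesis using that by blast
qed

lemma norm_diff_sq: "(norm (x - y))\<^sup>2 = (norm x)\<^sup>2 + (norm (y::'a::real_inner))\<^sup>2 - 2 * (x \<bullet> y)"
  by (simp add: power2_norm_eq_inner inner_diff_left inner_diff_right inner_commute)

lemma optimal_part:
  fixes \<phi> \<psi> :: "'n::finite \<Rightarrow> 'a::{real_inner,banach,second_countable_topology}"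
  assumes cm: "cyclically_monotone (range (\<lambda>i. (\<phi> i, \<psi> i)))"
  shows "optimal_coupling (empirical \<phi>) (empirical \<psi>) (pair_coupling \<phi> \<psi>)"
proof -
  obtain h where hk: "\<And>j k. h j + \<psi> j \<bullet> (\<phi> k - \<phi> j) \<le> h k" using potentials[OF cm] by blast
  define U where "U = pmf_of_set (UNIV :: 'n set)"
  define jx where "jx x = (SOME j. \<phi> j = x)" for x
  define iy where "iy y = (SOME i. \<psi> i = y)" for y
  define F where "F x = h (jx x)" for x
  define G where "G y = \<phi> (iy y) \<bullet> \<psi> (iy y) - h (iy y)" for y
  have jx: "\<phi> (jx (\<phi> j)) = \<phi> j" for j unfolding jx_def by (rule someI_ex) blast
  have iy: "\<psi> (iy (\<psi> j)) = \<psi> j" for j unfolding iy_def by (rule someI_ex) blast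
  have ineq: "\<phi> j \<bullet> \<psi> i \<le> F (\<phi> j) + G (\<psi> i)" for i j
  proof -
    have "h (iy (\<psi> i)) + \<psi> (iy (\<psi> i)) \<bullet> (\<phi> (jx (\<phi> j)) - \<phi> (iy (\<psi> i))) \<le> h (jx (\<phi> j))" by (rule hk)
    thus ?thesis unfolding F_def G_def using jx[of j] iy[of i]
      by (simp add: inner_diff_right inner_commute)
  qed
  have eq: "F (\<phi> i) + G (\<psi> i) = \<phi> i \<bullet> \<psi> i" for i
  proof -
    have e1: "h (jx (\<phi> i)) = h i" using hk[of i "jx (\<phi> i)"] hk[of "jx (\<phi> i)" i] jx[of i] by simp
    have e2: "h i - h (iy (\<psi> i)) = \<psi> i \<bullet> (\<phi> i - \<phi> (iy (\<psi> i)))"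
      using hk[of i "iy (\<psi> i)"] hk[of "iy (\<psi> i)" i] iy[of i] by (simp add: inner_diff_right)
    show ?thesis unfolding F_def G_def e1 using e2 iy[of i]
      by (simp add: inner_diff_right inner_commute)
  qed
  define f1 where "f1 x = (norm x)\<^sup>2 - 2 * F x" for x
  define f2 where "f2 y = (norm y)\<^sup>2 - 2 * G y" for y
  define Q where "Q p = f1 (fst p) + f2 (snd p)" for p :: "'a \<times> 'a"
  have cpl: "is_coupling (empirical \<phi>) (empirical \<psi>) (pair_coupling \<phi> \<psi>)"
    unfolding is_coupling_def empirical_def pair_coupling_def by (simp add: pmf.map_comp o_def)
  have supp: "set_pmf g \<subseteq> range \<phi> \<times> range \<psi>" if "is_coupling (empirical \<phi>) (empirical \<psi>) g" for g
  proof
    fix p assume p: "p \<in> set_pmf g"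
    have "fst p \<in> set_pmf (map_pmf fst g)" "snd p \<in> set_pmf (map_pmf snd g)" using p by auto
    thus "p \<in> range \<phi> \<times> range \<psi>" using that
      unfolding is_coupling_def empirical_def by (auto simp: mem_Times_iff)
  qed
  have fin: "finite (set_pmf g)" if "is_coupling (empirical \<phi>) (empirical \<psi>) g" for g
    using supp[OF that] by (rule finite_subset) simp
  have QE: "measure_pmf.expectation g Q = measure_pmf.expectation (empirical \<phi>) f1 + measure_pmf.expectation (empirical \<psi>) f2"
    if c: "is_coupling (empirical \<phi>) (empirical \<psi>) g" for g
  proof -
    have "measure_pmf.expectation g Q = measure_pmf.expectation g (\<lambda>p. f1 (fst p)) + measure_pmf.expectation g (\<lambda>p. f2 (snd p))"
      unfolding Q_def by (rule Bochner_Integration.integral_add) (auto intro: integrable_measure_pmf_finite fin[OF c])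
    also have "\<dots> = measure_pmf.expectation (map_pmf fst g) f1 + measure_pmf.expectation (map_pmf snd g) f2"
      by simp
    finally show ?thesis using c unfolding is_coupling_def by simp
  qed
  have "transport_cost (pair_coupling \<phi> \<psi>) \<le> transport_cost g"
    if c: "is_coupling (empirical \<phi>) (empirical \<psi>) g" for g
  proof -
    have "transport_cost (pair_coupling \<phi> \<psi>) = measure_pmf.expectation (pair_coupling \<phi> \<psi>) Q"
      unfolding transport_cost_def pair_coupling_def
      by (simp add: Q_def f1_def f2_def norm_diff_sq eq[symmetric] algebra_simps)
    also have "\<dots> = measure_pmf.expectation g Q" using QE[OF cpl] QE[OF c] by simp
    also have "\<dots> \<le> transport_cost g"
      unfolding transport_cost_def
    proof (rule integral_mono_AE)
      show "integrable (measure_pmf g) Q" by (rule integrable_measure_pmf_finite[OF fin[OF c]])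
      show "integrable (measure_pmf g) (\<lambda>(x, y). (norm (x - y))\<^sup>2)" by (rule integrable_measure_pmf_finite[OF fin[OF c]])
      show "AE p in measure_pmf g. Q p \<le> (case p of (x, y) \<Rightarrow> (norm (x - y))\<^sup>2)"
      proof (rule AE_pmfI)
        fix p assume "p \<in> set_pmf g"
        then obtain i j where p: "p = (\<phi> j, \<psi> i)" using supp[OF c] by blast
        show "Q p \<le> (case p of (x, y) \<Rightarrow> (norm (x - y))\<^sup>2)"
          using ineq[of j i] unfolding p Q_def f1_def f2_def by (simp add: norm_diff_sq)
      qed
    qed
    finally show ?thesis .
  qed
  thus ?thesis using cpl unfolding optimal_coupling_def by blast
qed



theorem mainTheorem5:
  fixes \<phi> \<psi> :: "'n::finite \<Rightarrow> real^'d"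
  assumes "is_frame \<phi>" and "is_frame \<psi>"
    and "\<not> (\<exists>l<0. is_eigenvalue (mp_pinv (analysis_op \<psi>) ** analysis_op \<phi>) l)"
    and "cyclically_monotone (range (\<lambda>i. (\<phi> i, \<psi> i)))"
  shows "optimal_coupling (empirical \<phi>) (empirical \<psi>) (pair_coupling \<phi> \<psi>) \<and>
         (\<forall>t\<in>{0..1}. span (set_pmf (geodesic_measure (pair_coupling \<phi> \<psi>) t)) = UNIV)"
proof (intro conjI ballI)
  show "optimal_coupling (empirical \<phi>) (empirical \<psi>) (pair_coupling \<phi> \<psi>)"
    by (rule optimal_part[OF assms(4)])
next
  fix t :: real assume t: "t \<in> {0..1}"
  define g where "g i = (1 - t) *\<^sub>R \<phi> i + t *\<^sub>R \<psi> i" for i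
  have "set_pmf (geodesic_measure (pair_coupling \<phi> \<psi>) t) = range g"
    unfolding geodesic_measure_def pair_coupling_def g_def by (simp add: image_image)
  moreover have "span (range g) = UNIV"
  proof (rule inj_frame)
    fix v assume v0: "analysis_op g *v v = 0"
    let ?A = "analysis_op \<phi>" and ?B = "analysis_op \<psi>" and ?P = "mp_pinv (analysis_op \<psi>)"
    have lin: "(1 - t) *\<^sub>R (?A *v v) + t *\<^sub>R (?B *v v) = 0"
      proof -
      have "(analysis_op g *v v) $ i = ((1 - t) *\<^sub>R (?A *v v) + t *\<^sub>R (?B *v v)) $ i" for i
        by (simp only: aop_apply g_def inner_add_left inner_scaleR_left vector_add_component vector_scaleR_component real_scaleR_def)
      thus ?thesis using v0 by (metis vec_eq_iff)
    qed
    have injB: "\<And>w. ?B *v w = 0 \<Longrightarrow> w = 0" using frame_inj[OF assms(2)] by blast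
    have PB: "?P ** ?B = mat 1" by (rule pinv_left[OF injB])
    consider "t = 0" | "t = 1" | "0 < t" "t < 1" using t by fastforce
    thus "v = 0"
    proof cases
      case 1
      hence "?A *v v = 0" using lin by (simp only: diff_zero scaleR_one scaleR_zero_left add_0_right)
      thus ?thesis using frame_inj[OF assms(1)] by blast
    next
      case 2
      hence "?B *v v = 0" using lin by (simp only: diff_self scaleR_one scaleR_zero_left add_0_left)
      thus ?thesis using injB by blast
    next
      case 3
      have "?P *v ((1 - t) *\<^sub>R (?A *v v) + t *\<^sub>R (?B *v v)) = 0" using lin by simp
      moreover have "?P *v (?B *v v) = v"
        by (simp only: matrix_vector_mul_assoc PB matrix_vector_mul_lid)
      ultimately have "(1 - t) *\<^sub>R ((?P ** ?A) *v v) + t *\<^sub>R v = 0"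
        by (simp only: matrix_vector_right_distrib matrix_vector_mult_scaleR matrix_vector_mul_assoc)
      hence e: "(1 - t) *\<^sub>R ((?P ** ?A) *v v) = (- t) *\<^sub>R v"
        by (simp only: scaleR_minus_left eq_neg_iff_add_eq_0)
      have "(?P ** ?A) *v v = (1 / (1 - t)) *\<^sub>R ((1 - t) *\<^sub>R ((?P ** ?A) *v v))"
        using 3 by simp
      also have "\<dots> = (- t / (1 - t)) *\<^sub>R v" unfolding e by simp
      finally have "(?P ** ?A) *v v = (- t / (1 - t)) *\<^sub>R v" .
      moreover have "- t / (1 - t) < 0" using 3 by simp
      ultimately show ?thesis using assms(3) unfolding is_eigenvalue_def by blast
    qed
  qed
  ultimately show "span (set_pmf (geodesic_measure (pair_coupling \<phi> \<psi>) t)) = UNIV" by simp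
qed


end
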